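(* For every $N\in\mathbb{N}$, every $f\in\mathcal{E}_N$, every $0<\delta\le1$ and every $\beta\in\mathbb{N}^n$, $$\|\partial_x^\beta f\|_{L^2(\mathbb{R}^n)}\le e^{\frac{e}{2\delta^2}}(2\delta)^{|\beta|}|\beta|!\,e^{\delta^{-1}\sqrt{N}}\|f\|_{L^2(\mathbb{R}^n)}.$$
   Context: The one-dimensional Hermite functions are $\phi_k(x)=\frac{(-1)^k}{\sqrt{2^k k!\sqrt{\pi}}}e^{x^2/2}\frac{d^k}{dx^k}(e^{-x^2})$, $k\in\mathbb{N}$. For $\alpha\in\mathbb{N}^n$, $\Phi_\alpha(x)=\prod_{j=1}^n\phi_{\alpha_j}(x_j)$ and $|\alpha|=\alpha_1+\dots+\alpha_n$. $\mathcal{E}_N=\mathrm{Span}_{\mathbb{C}}\{\Phi_\alpha:|\alpha|\le N\}$; $\partial_x^\beta=\partial_{x_1}^{\beta_1}\cdots\partial_{x_n}^{\beta_n}$. *)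

theory Defs
  imports "HOL-Analysis.Analysis"
begin

definition hermite_fun :: "nat \<Rightarrow> real \<Rightarrow> real" where
  "hermite_fun k x = (-1) ^ k / sqrt (2 ^ k * fact k * sqrt pi) * exp (x\<^sup>2 / 2)
      * (deriv ^^ k) (\<lambda>t. exp (- (t\<^sup>2))) x"

definition hermite_multi :: "('n::finite \<Rightarrow> nat) \<Rightarrow> real ^ 'n \<Rightarrow> real" where
  "hermite_multi \<alpha> x = (\<Prod>j\<in>UNIV. hermite_fun (\<alpha> j) (x $ j))"

definition mlen :: "('n::finite \<Rightarrow> nat) \<Rightarrow> nat" where
  "mlen \<alpha> = (\<Sum>j\<in>UNIV. \<alpha> j)"

definition hermite_space :: "nat \<Rightarrow> (real ^ 'n::finite \<Rightarrow> complex) set" where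
  "hermite_space N = {f. \<exists>c :: ('n \<Rightarrow> nat) \<Rightarrow> complex.
      f = (\<lambda>x. \<Sum>\<alpha>\<in>{\<alpha>. mlen \<alpha> \<le> N}. c \<alpha> * complex_of_real (hermite_multi \<alpha> x))}"

definition partial :: "'n::finite \<Rightarrow> (real ^ 'n \<Rightarrow> complex) \<Rightarrow> real ^ 'n \<Rightarrow> complex" where
  "partial i f x = vector_derivative (\<lambda>t. f (x + t *\<^sub>R axis i 1)) (at 0)"

text \<open>The multi-derivative partial^beta, applying partial_i beta_i times for each coordinate i,
  coordinates processed in a fixed enumeration order (irrelevant for smooth functions).\<close>
definition coord_list :: "'n::finite list" where
  "coord_list = (SOME xs. distinct xs \<and> set xs = UNIV)"

definition multi_partial :: "('n::finite \<Rightarrow> nat) \<Rightarrow> (real ^ 'n \<Rightarrow> complex) \<Rightarrow> real ^ 'n \<Rightarrow> complex" where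
  "multi_partial \<beta> f = foldr (\<lambda>i g. (partial i ^^ \<beta> i) g) coord_list f"

definition L2_norm :: "(real ^ 'n::finite \<Rightarrow> complex) \<Rightarrow> real" where
  "L2_norm f = sqrt (LINT x|lborel. (cmod (f x))\<^sup>2)"

end

theory Submission
  imports Defs "HOL-Probability.Probability" "HOL-Computational_Algebra.Polynomial"
begin


lemma lborel_prod_integrable:
  fixes f :: "'a::euclidean_space \<Rightarrow> real \<Rightarrow> real"
  assumes int: "\<And>b. b \<in> Basis \<Longrightarrow> integrable lborel (f b)"
  shows "integrable lborel (\<lambda>x::'a. \<Prod>b\<in>Basis. f b (x \<bullet> b))
     \<and> integral\<^sup>L lborel (\<lambda>x::'a. \<Prod>b\<in>Basis. f b (x \<bullet> b)) = (\<Prod>b\<in>Basis. integral\<^sup>L lborel (f b))"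
proof -
  interpret product_sigma_finite "\<lambda>_. lborel :: real measure" by standard
  have meas[measurable]: "\<And>b. b \<in> Basis \<Longrightarrow> f b \<in> borel_measurable borel"
    using int by (simp add: borel_measurable_integrable)
  have eq: "\<And>\<omega>. \<omega> \<in> space (\<Pi>\<^sub>M b\<in>Basis. lborel) \<Longrightarrow>
     (\<Prod>b\<in>Basis. f b ((\<Sum>b'\<in>Basis. \<omega> b' *\<^sub>R b') \<bullet> b)) = (\<Prod>b\<in>Basis. f b (\<omega> b))"
    by (intro prod.cong refl) (simp add: inner_sum_left inner_Basis if_distrib sum.delta cong: if_cong)
  have m2: "(\<lambda>x::'a. \<Prod>b\<in>Basis. f b (x \<bullet> b)) \<in> borel_measurable borel"
    by measurable
  have I1: "integrable (\<Pi>\<^sub>M b\<in>Basis. lborel) (\<lambda>\<omega>. \<Prod>b\<in>Basis. f b (\<omega> b))"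
    by (rule product_integrable_prod) (auto intro: int)
  have I2: "integral\<^sup>L (\<Pi>\<^sub>M b\<in>Basis. lborel) (\<lambda>\<omega>. \<Prod>b\<in>Basis. f b (\<omega> b)) = (\<Prod>b\<in>Basis. integral\<^sup>L lborel (f b))"
    by (rule product_integral_prod) (auto intro: int)
  have T: "(\<lambda>\<omega>. \<Sum>b\<in>Basis. \<omega> b *\<^sub>R b) \<in> measurable (\<Pi>\<^sub>M b\<in>Basis. lborel) (borel :: 'a measure)"
    by measurable
  show ?thesis
  proof
    show "integrable lborel (\<lambda>x::'a. \<Prod>b\<in>Basis. f b (x \<bullet> b))"
      apply (subst lborel_eq)
      apply (subst integrable_distr_eq[OF T m2])
      using I1 Bochner_Integration.integrable_cong[OF refl eq] by simp
    show "integral\<^sup>L lborel (\<lambda>x::'a. \<Prod>b\<in>Basis. f b (x \<bullet> b)) = (\<Prod>b\<in>Basis. integral\<^sup>L lborel (f b))"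
      apply (subst lborel_eq)
      apply (subst integral_distr[OF T m2])
      using I2 eq by (metis (no_types, lifting) Bochner_Integration.integral_cong)
  qed
qed

lemma Basis_vec_real: "(Basis :: (real^'n::finite) set) = range (\<lambda>j. axis j 1)"
  unfolding Basis_vec_def by auto

lemma vec_prod_integrable:
  fixes g :: "'n::finite \<Rightarrow> real \<Rightarrow> real"
  assumes int: "\<And>j. integrable lborel (g j)"
  shows "integrable lborel (\<lambda>x::real^'n. \<Prod>j\<in>UNIV. g j (x $ j))
     \<and> integral\<^sup>L lborel (\<lambda>x::real^'n. \<Prod>j\<in>UNIV. g j (x $ j)) = (\<Prod>j\<in>UNIV. integral\<^sup>L lborel (g j))"
proof -
  define f where "f b = g (SOME j. b = axis j (1::real))" for b :: "real^'n"
  have inj: "inj (\<lambda>j::'n. axis j (1::real))" by (auto simp: inj_def axis_eq_axis)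
  have fax: "f (axis j 1) = g j" for j
  proof -
    have "(SOME i. axis j (1::real) = axis i 1) = j"
      by (rule some_equality) (auto simp: axis_eq_axis)
    then show ?thesis by (simp add: f_def)
  qed
  have P: "(\<Prod>b\<in>Basis. h b) = (\<Prod>j\<in>UNIV. h (axis j (1::real)))" for h :: "real^'n \<Rightarrow> real"
    unfolding Basis_vec_real by (subst prod.reindex[OF inj]) simp
  have I: "\<And>b. b \<in> (Basis :: (real^'n) set) \<Longrightarrow> integrable lborel (f b)"
    unfolding Basis_vec_real using int fax by auto
  from lborel_prod_integrable[of f, OF I] show ?thesis
    unfolding P by (simp add: fax inner_axis)
qed


lemma mom_even: "has_bochner_integral lborel (\<lambda>x::real. exp (- x\<^sup>2)*x^(2*k)) (sqrt pi * (fact (2*k) / (2^(2*k) * fact k)))"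
  using has_bochner_integral_even_function[OF gaussian_moment_even_pos[where k=k]] by simp

lemma mom_odd: "has_bochner_integral lborel (\<lambda>x::real. exp (- x\<^sup>2)*x^(2*k+1)) 0"
  using gaussian_moment_odd_pos by (rule has_bochner_integral_odd_function) simp

definition mom :: "nat \<Rightarrow> real" where "mom m = (LINT x|lborel. exp (- x\<^sup>2) * x^m)"

lemma mom_int: "integrable lborel (\<lambda>x::real. exp (- x\<^sup>2) * x^m)"
proof (cases "even m")
  case True then obtain k where "m = 2*k" by auto
  then show ?thesis using integrable.intros[OF mom_even[of k]] by simp
next
  case False then obtain k where "m = 2*k+1" using oddE by blast
  then show ?thesis using integrable.intros[OF mom_odd[of k]] by simp
qed

lemma mom_rec: "2 * mom (m+2) = (m+1) * mom m"
proof (cases "even m")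
  case True then obtain k where m: "m = 2*k" by auto
  have a: "mom m = sqrt pi * (fact (2*k) / (2^(2*k) * fact k))"
    unfolding mom_def m using mom_even[of k] by (simp add: has_bochner_integral_integral_eq)
  have b: "mom (m+2) = sqrt pi * (fact (2*Suc k) / (2^(2*Suc k) * fact (Suc k)))"
  proof -
    have e: "m+2 = 2*Suc k" using m by simp
    show ?thesis unfolding mom_def e by (rule has_bochner_integral_integral_eq[OF mom_even])
  qed
  have e2: "2*Suc k = Suc (Suc (2*k))" by simp
  have f1: "(fact (Suc (Suc (2*k))) :: real) = (2*real k + 2) * ((2*real k + 1) * fact (2*k))"
    by (simp only: fact_Suc) (simp add: algebra_simps)
  have f2: "fact (Suc k) = (real k+1) * (fact k :: real)" by simp
  have f3: "(2::real)^(2*Suc k) = 4 * 2^(2*k)" by (simp only: e2 power_Suc)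
  have kk: "real k + 1 > 0" by simp
  have ar: "\<And>F f p q. F > 0 \<Longrightarrow> f > 0 \<Longrightarrow> p > 0 \<Longrightarrow>
     2 * (q * (((2*real k + 2) * ((2*real k + 1) * F)) / (4 * p * ((real k+1) * f)))) = (2*real k+1) * (q * (F / (p * f)))"
  proof -
    fix F f p q :: real assume h: "F > 0" "f > 0" "p > 0"
    define r where "r = real k + 1"
    have r: "r > 0" "2*real k + 2 = 2*r" "2*real k + 1 = 2*r - 1" unfolding r_def by auto
    show "2 * (q * (((2*real k + 2) * ((2*real k + 1) * F)) / (4 * p * ((real k+1) * f)))) = (2*real k+1) * (q * (F / (p * f)))"
      unfolding r(2) r(3) r_def[symmetric] using r(1) h by (simp add: field_simps)
  qed
  have "2 * mom (m+2) = (2*real k+1) * (sqrt pi * (fact (2*k) / (2^(2*k) * fact k)))"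
    unfolding b f3 f2 unfolding e2 f1 by (rule ar) auto
  then show ?thesis using a unfolding m by simp
next
  case False then obtain k where m: "m = 2*k+1" using oddE by blast
  have a: "mom m = 0"
    unfolding mom_def m using mom_odd[of k] by (simp add: has_bochner_integral_integral_eq)
  have b: "mom (m+2) = 0"
  proof -
    have e: "m+2 = 2*Suc k+1" using m by simp
    show ?thesis unfolding mom_def e by (rule has_bochner_integral_integral_eq[OF mom_odd])
  qed
  show ?thesis using a b by simp
qed

lemma mom1: "mom 1 = 0"
  unfolding mom_def using mom_odd[of 0] by (simp add: has_bochner_integral_integral_eq)

lemma mom0: "mom 0 = sqrt pi"
  unfolding mom_def using mom_even[of 0] by (simp add: has_bochner_integral_integral_eq)

definition gL :: "real poly \<Rightarrow> real" where "gL p = (LINT x|lborel. poly p x * exp (- x\<^sup>2))"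

lemma gL_int: "integrable lborel (\<lambda>x. poly (p::real poly) x * exp (- x\<^sup>2))"
proof -
  have "(\<lambda>x. poly p x * exp (- x\<^sup>2)) = (\<lambda>x. \<Sum>i\<le>degree p. coeff p i * (exp (- x\<^sup>2) * x^i))"
    by (simp add: poly_altdef sum_distrib_left sum_distrib_right mult_ac)
  moreover have "integrable lborel (\<lambda>x. \<Sum>i\<le>degree p. coeff p i * (exp (- x\<^sup>2) * x^i))"
    by (intro Bochner_Integration.integrable_sum Bochner_Integration.integrable_mult_right) (simp add: mom_int)
  ultimately show ?thesis by simp
qed

lemma gL_add: "gL (p + q) = gL p + gL q"
  unfolding gL_def by (simp add: distrib_right gL_int)

lemma gL_diff: "gL (p - q) = gL p - gL q"
  unfolding gL_def by (simp add: left_diff_distrib gL_int)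

lemma gL_smult: "gL (smult c p) = c * gL p"
  unfolding gL_def by (simp add: mult.assoc)

lemma gL_monom: "gL (monom c m) = c * mom m"
  unfolding gL_def mom_def by (simp add: poly_monom mult_ac)

definition Top :: "real poly \<Rightarrow> real poly" where "Top p = pderiv p - [:0,2:] * p"

lemma Top_add: "Top (p + q) = Top p + Top q"
  unfolding Top_def by (simp add: pderiv_add algebra_simps smult_add_right)

lemma gL_Top_monom: "gL (Top (monom c m)) = 0"
proof -
  have e: "[:0,2:] = monom (2::real) 1" by (simp add: monom_Suc monom_0)
  have "Top (monom c m) = monom (of_nat m * c) (m - 1) - monom (2*c) (m+1)"
    unfolding Top_def e by (simp add: pderiv_monom mult_monom)
  then have "gL (Top (monom c m)) = of_nat m * c * mom (m - 1) - 2 * c * mom (m+1)"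
    by (simp add: gL_diff gL_monom)
  also have "\<dots> = 0"
  proof (cases m)
    case 0 then show ?thesis using mom1 by simp
  next
    case (Suc k) then show ?thesis using mom_rec[of k] by (simp add: algebra_simps)
  qed
  finally show ?thesis .
qed

lemma gL_Top: "gL (Top p) = 0"
proof -
  have "gL (Top (\<Sum>i\<in>A. monom (coeff p i) i)) = 0" if "finite A" for A
    using that
  proof induct
    case empty then show ?case by (simp add: Top_def gL_def)
  next
    case (insert a A) then show ?case by (simp add: Top_add gL_add gL_Top_monom)
  qed
  from this[of "{..degree p}"] show ?thesis by (simp add: poly_as_sum_of_monoms)
qed


fun Hp :: "nat \<Rightarrow> real poly" where
  "Hp 0 = 1"
| "Hp (Suc k) = [:0,2:] * Hp k - pderiv (Hp k)"

declare Hp.simps(2)[simp del]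

lemma Hp_deriv: "pderiv (Hp (Suc k)) = smult (2*(real k+1)) (Hp k)"
proof (induction k)
  case 0 then show ?case by (simp add: pderiv_pCons Hp.simps)
next
  case (Suc k)
  have "pderiv (Hp (Suc (Suc k))) = smult 2 (Hp (Suc k)) + [:0,2:] * pderiv (Hp (Suc k)) - pderiv (pderiv (Hp (Suc k)))"
    by (subst Hp.simps(2)[of "Suc k"]) (simp add: pderiv_mult pderiv_diff pderiv_pCons pderiv_smult)
  also have "\<dots> = smult 2 (Hp (Suc k)) + smult (2*(real k+1)) ([:0,2:] * Hp k - pderiv (Hp k))"
    using Suc.IH by (simp add: pderiv_smult algebra_simps smult_diff_right)
  also have "\<dots> = smult (2*(real (Suc k)+1)) (Hp (Suc k))"
  proof -
    have h: "[:0,2:] * Hp k - pderiv (Hp k) = Hp (Suc k)" by (simp add: Hp.simps)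
    show ?thesis unfolding h by (simp only: smult_add_left[symmetric]) (simp add: algebra_simps)
  qed
  finally show ?case .
qed

lemma gauss_derivs: "(deriv ^^ k) (\<lambda>t. exp (- (t\<^sup>2))) = (\<lambda>x::real. (-1)^k * poly (Hp k) x * exp (- (x\<^sup>2)))"
proof (induction k)
  case 0 then show ?case by simp
next
  case (Suc k)
  have dd: "deriv (\<lambda>x::real. (-1)^k * poly (Hp k) x * exp (- (x\<^sup>2))) x = (-1)^(Suc k) * poly (Hp (Suc k)) x * exp (- (x\<^sup>2))" for x
  proof (rule DERIV_imp_deriv)
    have e: "((\<lambda>x::real. exp (- (x\<^sup>2))) has_real_derivative exp (- (x\<^sup>2)) * (- (2*x))) (at x)"
      by (auto intro!: derivative_eq_intros)
    have "((\<lambda>x::real. (-1)^k * (poly (Hp k) x * exp (- (x\<^sup>2)))) has_real_derivative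
       (-1)^k * (poly (pderiv (Hp k)) x * exp (- (x\<^sup>2)) + poly (Hp k) x * (exp (- (x\<^sup>2)) * (- (2*x))))) (at x)"
      by (intro DERIV_cmult DERIV_cong[OF DERIV_mult[OF poly_DERIV e]]) (simp add: algebra_simps)
    moreover have "(-1)^k * (poly (pderiv (Hp k)) x * exp (- (x\<^sup>2)) + poly (Hp k) x * (exp (- (x\<^sup>2)) * (- (2*x))))
       = (-1)^(Suc k) * poly (Hp (Suc k)) x * exp (- (x\<^sup>2))"
      by (simp add: Hp.simps algebra_simps)
    ultimately show "((\<lambda>x::real. (-1)^k * poly (Hp k) x * exp (- (x\<^sup>2))) has_real_derivative (-1)^(Suc k) * poly (Hp (Suc k)) x * exp (- (x\<^sup>2))) (at x)"
      by (simp add: mult.assoc)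
  qed
  have "(deriv ^^ Suc k) (\<lambda>t. exp (- (t\<^sup>2))) = deriv (\<lambda>x::real. (-1)^k * poly (Hp k) x * exp (- (x\<^sup>2)))"
    by (simp only: funpow.simps o_apply Suc.IH)
  then show ?case by (rule trans) (rule ext, rule dd)
qed

definition ck :: "nat \<Rightarrow> real" where "ck k = 1 / sqrt (2^k * fact k * sqrt pi)"
definition P :: "nat \<Rightarrow> real poly" where "P k = smult (ck k) (Hp k)"

lemma hermite_fun_eq: "hermite_fun k x = poly (P k) x * exp (- (x\<^sup>2) / 2)"
proof -
  have e: "exp (x\<^sup>2 / 2) * exp (- (x\<^sup>2)) = exp (- (x\<^sup>2) / 2)"
    by (simp add: exp_add[symmetric])
  have "hermite_fun k x = ((-1)^k * (-1)^k) * ck k * poly (Hp k) x * (exp (x\<^sup>2 / 2) * exp (- (x\<^sup>2)))"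
    unfolding hermite_fun_def gauss_derivs ck_def by (simp add: mult_ac)
  also have "((-1::real)^k * (-1)^k) = 1" by (simp add: power_mult_distrib[symmetric])
  finally show ?thesis using e by (simp add: P_def)
qed

lemma ck_pos: "ck k > 0" unfolding ck_def by simp

lemma ck_Suc: "ck (Suc k) * sqrt (2*(real k+1)) = ck k"
proof -
  have "sqrt (2 ^ Suc k * fact (Suc k) * sqrt pi) = sqrt (2*(real k+1)) * sqrt (2^k * fact k * sqrt pi)"
    by (simp add: real_sqrt_mult[symmetric] algebra_simps)
  then show ?thesis unfolding ck_def by (simp add: field_simps)
qed

lemma P_rec: "smult (sqrt (2*(real k+1))) (P (Suc k)) = [:0,2:] * P k - pderiv (P k)"
proof -
  have "smult (sqrt (2*(real k+1))) (P (Suc k)) = smult (ck k) (Hp (Suc k))"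
    unfolding P_def using ck_Suc[of k] by (simp add: mult_ac)
  then show ?thesis by (simp add: P_def pderiv_smult smult_diff_right Hp.simps(2)[of k])
qed

lemma P_der: "pderiv (P k) = smult (sqrt (2*real k)) (P (k - 1))"
proof (cases k)
  case 0 then show ?thesis by (simp add: P_def pderiv_smult)
next
  case (Suc j)
  have s: "sqrt (2*(real j+1)) * sqrt (2*(real j+1)) = 2*(real j+1)" by simp
  have "pderiv (P k) = smult (ck (Suc j) * (2*(real j+1))) (Hp j)"
    by (simp add: Suc P_def pderiv_smult Hp_deriv)
  also have "ck (Suc j) * (2*(real j+1)) = sqrt (2*real k) * ck j"
  proof -
    have "sqrt (2*real k) * ck j = sqrt (2*(real j+1)) * (ck (Suc j) * sqrt (2*(real j+1)))"
      using ck_Suc[of j] by (simp add: Suc)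
    also have "\<dots> = ck (Suc j) * (sqrt (2*(real j+1)) * sqrt (2*(real j+1)))" by (simp only: mult_ac)
    finally show ?thesis using s by simp
  qed
  finally show ?thesis by (simp add: Suc P_def)
qed

definition Ih :: "nat \<Rightarrow> nat \<Rightarrow> real" where "Ih j k = gL (P j * P k)"

lemma Ih_comm: "Ih j k = Ih k j" unfolding Ih_def by (simp add: mult.commute)

lemma Ih_step: "sqrt (2*(real k+1)) * Ih j (Suc k) = sqrt (2*real j) * Ih (j - 1) k"
proof -
  have "sqrt (2*(real k+1)) * Ih j (Suc k) = gL (P j * ([:0,2:] * P k - pderiv (P k)))"
    unfolding Ih_def P_rec[symmetric] by (simp add: gL_smult[symmetric])
  also have "P j * ([:0,2:] * P k - pderiv (P k)) = pderiv (P j) * P k - Top (P j * P k)"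
    unfolding Top_def by (simp add: pderiv_mult algebra_simps)
  also have "gL \<dots> = gL (pderiv (P j) * P k)" by (simp add: gL_diff gL_Top)
  also have "\<dots> = sqrt (2*real j) * Ih (j - 1) k"
    unfolding P_der Ih_def by (simp add: gL_smult)
  finally show ?thesis .
qed

lemma Ih00: "Ih 0 0 = 1"
proof -
  have "P 0 * P 0 = monom (ck 0 * ck 0) 0" by (simp add: P_def monom_0)
  then have "Ih 0 0 = ck 0 * ck 0 * sqrt pi" by (simp add: Ih_def gL_monom mom0)
  also have "\<dots> = 1" by (simp add: ck_def)
  finally show ?thesis .
qed

lemma Ih_ortho: "Ih j k = (if j = k then 1 else 0)"
proof (induction k arbitrary: j)
  case 0
  show ?case
  proof (cases j)
    case 0 then show ?thesis by (simp add: Ih00)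
  next
    case (Suc j')
    have "sqrt 2 * Ih 0 (Suc j') = 0" using Ih_step[of j' 0] by simp
    then show ?thesis using Suc by (simp add: Ih_comm)
  qed
next
  case (Suc k)
  have pos: "sqrt (2*(real k+1)) > 0" by simp
  show ?case
  proof (cases j)
    case 0
    then show ?thesis using Ih_step[of k 0] pos by simp
  next
    case (Suc j')
    have "sqrt (2*(real k+1)) * Ih j (Suc k) = sqrt (2*real (Suc j')) * (if j' = k then 1 else 0)"
      using Ih_step[of k j] Suc.IH[of j'] Suc by simp
    then show ?thesis using Suc pos by (auto simp: add.commute)
  qed
qed

lemma hermite_prod_eq: "hermite_fun j x * hermite_fun k x = poly (P j * P k) x * exp (- (x\<^sup>2))"
proof -
  have "exp (- (x\<^sup>2) / 2) * exp (- (x\<^sup>2) / 2) = exp (- (x\<^sup>2))"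
    by (simp add: exp_add[symmetric])
  then show ?thesis unfolding hermite_fun_eq by (simp add: mult_ac)
qed

lemma hermite_ortho: "integrable lborel (\<lambda>x. hermite_fun j x * hermite_fun k x)
   \<and> (LINT x|lborel. hermite_fun j x * hermite_fun k x) = (if j = k then 1 else 0)"
  unfolding hermite_prod_eq using gL_int[of "P j * P k"] Ih_ortho[of j k]
  by (simp add: Ih_def gL_def)

lemma hermite_deriv: "(hermite_fun k has_real_derivative
   (sqrt (2*real k)/2 * hermite_fun (k - 1) x - sqrt (2*(real k+1))/2 * hermite_fun (Suc k) x)) (at x)"
proof -
  have d: "((\<lambda>x. poly (P k) x * exp (- (x\<^sup>2) / 2)) has_real_derivative
     (poly (pderiv (P k)) x - x * poly (P k) x) * exp (- (x\<^sup>2) / 2)) (at x)"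
  proof -
    have e: "((\<lambda>x::real. exp (- (x\<^sup>2) / 2)) has_real_derivative exp (- (x\<^sup>2) / 2) * (- x)) (at x)"
      by (auto intro!: derivative_eq_intros)
    have "((\<lambda>x. poly (P k) x * exp (- (x\<^sup>2) / 2)) has_real_derivative
       poly (pderiv (P k)) x * exp (- (x\<^sup>2) / 2) + poly (P k) x * (exp (- (x\<^sup>2) / 2) * (- x))) (at x)"
      by (rule DERIV_cong[OF DERIV_mult[OF poly_DERIV e]]) (simp add: algebra_simps)
    then show ?thesis by (simp add: algebra_simps)
  qed
  have r: "sqrt (2*(real k+1)) * poly (P (Suc k)) x = 2 * x * poly (P k) x - poly (pderiv (P k)) x"
    using arg_cong[OF P_rec[of k], of "\<lambda>p. poly p x"] by simp
  have q: "poly (pderiv (P k)) x = sqrt (2*real k) * poly (P (k - 1)) x"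
    by (simp add: P_der)
  have r2: "sqrt (2*(real k+1))/2 * poly (P (Suc k)) x = x * poly (P k) x - poly (pderiv (P k)) x / 2"
    using r by (simp add: field_simps)
  have eq: "poly (pderiv (P k)) x - x * poly (P k) x = sqrt (2*real k)/2 * poly (P (k - 1)) x - sqrt (2*(real k+1))/2 * poly (P (Suc k)) x"
    unfolding r2 q by simp
  have "(poly (pderiv (P k)) x - x * poly (P k) x) * exp (- (x\<^sup>2) / 2)
     = sqrt (2*real k)/2 * hermite_fun (k - 1) x - sqrt (2*(real k+1))/2 * hermite_fun (Suc k) x"
    unfolding hermite_fun_eq by (subst eq) (simp add: algebra_simps)
  then show ?thesis using d by (simp add: hermite_fun_eq[abs_def])
qed


abbreviation Hm where "Hm \<equiv> hermite_multi"

lemma prod_indicator_eq: "(\<Prod>j\<in>(UNIV::'n::finite set). (if (\<alpha>::'n\<Rightarrow>nat) j = \<gamma> j then 1 else 0::real)) = (if \<alpha> = \<gamma> then 1 else 0)"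
proof (cases "\<alpha> = \<gamma>")
  case True then show ?thesis by simp
next
  case False
  then obtain j where "\<alpha> j \<noteq> \<gamma> j" by auto
  then show ?thesis using False by (intro trans[OF prod_zero]) auto
qed

lemma Hm_ortho: "integrable lborel (\<lambda>x::real^'n::finite. Hm \<alpha> x * Hm \<gamma> x)
   \<and> (LINT x|lborel. Hm \<alpha> x * Hm \<gamma> x) = (if \<alpha> = \<gamma> then 1 else 0)"
proof -
  have eq: "(\<lambda>x::real^'n. Hm \<alpha> x * Hm \<gamma> x) = (\<lambda>x. \<Prod>j\<in>UNIV. (\<lambda>t. hermite_fun (\<alpha> j) t * hermite_fun (\<gamma> j) t) (x $ j))"
    by (simp add: hermite_multi_def prod.distrib)
  have I: "\<And>j. integrable lborel (\<lambda>t. hermite_fun (\<alpha> j) t * hermite_fun (\<gamma> j) t)"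
    using hermite_ortho by blast
  have V: "(\<Prod>j\<in>UNIV. LINT t|lborel. hermite_fun (\<alpha> j) t * hermite_fun (\<gamma> j) t) = (if \<alpha> = \<gamma> then 1 else 0)"
    using hermite_ortho prod_indicator_eq[of \<alpha> \<gamma>] by simp
  from vec_prod_integrable[of "\<lambda>j t. hermite_fun (\<alpha> j) t * hermite_fun (\<gamma> j) t", OF I] show ?thesis
    unfolding eq V by simp
qed

lemma Hm_ortho_int: "integrable lborel (\<lambda>x::real^'n::finite. Hm \<alpha> x * Hm \<gamma> x)"
  using Hm_ortho[of \<alpha> \<gamma>] by (rule conjunct1)

lemma Hm_ortho_val: "(LINT x|lborel. Hm \<alpha> x * Hm \<gamma> x) = (if \<alpha> = (\<gamma>::'n::finite\<Rightarrow>nat) then 1 else 0)"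
  using Hm_ortho[of \<alpha> \<gamma>] by (rule conjunct2)

lemma cmod_sum_sq:
  fixes w :: "'s \<Rightarrow> complex" and h :: "'s \<Rightarrow> real"
  shows "(cmod (\<Sum>s\<in>S. w s * complex_of_real (h s)))\<^sup>2 = (\<Sum>s\<in>S. \<Sum>t\<in>S. Re (w s * cnj (w t)) * (h s * h t))"
proof -
  have "complex_of_real ((cmod (\<Sum>s\<in>S. w s * complex_of_real (h s)))\<^sup>2)
       = (\<Sum>s\<in>S. w s * complex_of_real (h s)) * cnj (\<Sum>s\<in>S. w s * complex_of_real (h s))"
    by (rule complex_norm_square)
  also have "\<dots> = (\<Sum>s\<in>S. \<Sum>t\<in>S. (w s * cnj (w t)) * complex_of_real (h s * h t))"
    by (simp add: cnj_sum sum_product mult_ac)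
  finally have "(cmod (\<Sum>s\<in>S. w s * complex_of_real (h s)))\<^sup>2 = Re (\<Sum>s\<in>S. \<Sum>t\<in>S. (w s * cnj (w t)) * complex_of_real (h s * h t))"
    by (metis Re_complex_of_real)
  then show ?thesis by (simp add: Re_sum)
qed

definition comb :: "'s set \<Rightarrow> ('s \<Rightarrow> complex) \<Rightarrow> ('s \<Rightarrow> ('n::finite \<Rightarrow> nat)) \<Rightarrow> real^'n \<Rightarrow> complex" where
  "comb S w \<sigma> = (\<lambda>x. \<Sum>s\<in>S. w s * complex_of_real (Hm (\<sigma> s) x))"

lemma dbl_int:
  fixes C :: "'s \<Rightarrow> 's \<Rightarrow> real" and \<sigma> :: "'s \<Rightarrow> ('n::finite \<Rightarrow> nat)"
  shows "integrable lborel (\<lambda>x::real^'n. \<Sum>s\<in>S. \<Sum>t\<in>S. C s t * (Hm (\<sigma> s) x * Hm (\<sigma> t) x))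
    \<and> (LINT x|lborel. (\<Sum>s\<in>S. \<Sum>t\<in>S. C s t * (Hm (\<sigma> s) x * Hm (\<sigma> t) x))) = (\<Sum>s\<in>S. \<Sum>t\<in>S. C s t * (if \<sigma> s = \<sigma> t then 1 else 0))"
proof -
  have I: "\<And>s t. integrable lborel (\<lambda>x::real^'n. Hm (\<sigma> s) x * Hm (\<sigma> t) x)" by (rule Hm_ortho_int)
  have I2: "\<And>s t. integrable lborel (\<lambda>x::real^'n. C s t * (Hm (\<sigma> s) x * Hm (\<sigma> t) x))"
    by (rule Bochner_Integration.integrable_mult_right) (rule I)
  have I3: "\<And>s. integrable lborel (\<lambda>x::real^'n. \<Sum>t\<in>S. C s t * (Hm (\<sigma> s) x * Hm (\<sigma> t) x))"
    by (rule Bochner_Integration.integrable_sum) (rule I2)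
  have "(LINT x|lborel. (\<Sum>s\<in>S. \<Sum>t\<in>S. C s t * (Hm (\<sigma> s) x * Hm (\<sigma> t) x)))
      = (\<Sum>s\<in>S. LINT x|lborel. (\<Sum>t\<in>S. C s t * (Hm (\<sigma> s) x * Hm (\<sigma> t) x)))"
    by (rule Bochner_Integration.integral_sum) (rule I3)
  also have "\<dots> = (\<Sum>s\<in>S. \<Sum>t\<in>S. LINT x|lborel. C s t * (Hm (\<sigma> s) x * Hm (\<sigma> t) x))"
    by (intro sum.cong refl Bochner_Integration.integral_sum I2)
  also have "\<dots> = (\<Sum>s\<in>S. \<Sum>t\<in>S. C s t * (if \<sigma> s = \<sigma> t then 1 else 0))"
    by (intro sum.cong refl) (simp only: Bochner_Integration.integral_mult_right_zero Hm_ortho_val)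
  finally have eq: "(LINT x|lborel. (\<Sum>s\<in>S. \<Sum>t\<in>S. C s t * (Hm (\<sigma> s) x * Hm (\<sigma> t) x))) = (\<Sum>s\<in>S. \<Sum>t\<in>S. C s t * (if \<sigma> s = \<sigma> t then 1 else 0))" .
  have int: "integrable lborel (\<lambda>x::real^'n. \<Sum>s\<in>S. \<Sum>t\<in>S. C s t * (Hm (\<sigma> s) x * Hm (\<sigma> t) x))"
    by (rule Bochner_Integration.integrable_sum) (rule I3)
  show ?thesis by (rule conjI[OF int eq])
qed

lemma comb_L2:
  assumes "finite S"
  shows "integrable lborel (\<lambda>x. (cmod (comb S w \<sigma> x))\<^sup>2)
    \<and> (LINT x|lborel. (cmod (comb S w \<sigma> x))\<^sup>2) = (\<Sum>s\<in>S. \<Sum>t\<in>S. Re (w s * cnj (w t)) * (if \<sigma> s = \<sigma> t then 1 else 0))"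
proof -
  have eq: "(\<lambda>x. (cmod (comb S w \<sigma> x))\<^sup>2) = (\<lambda>x. \<Sum>s\<in>S. \<Sum>t\<in>S. (\<lambda>s t. Re (w s * cnj (w t))) s t * (Hm (\<sigma> s) x * Hm (\<sigma> t) x))"
    unfolding comb_def by (simp only: cmod_sum_sq)
  show ?thesis unfolding eq by (rule dbl_int)
qed

lemma comb_L2_inj:
  assumes "finite S" and inj: "\<And>s t. s \<in> S \<Longrightarrow> t \<in> S \<Longrightarrow> \<sigma> s = \<sigma> t \<Longrightarrow> s \<noteq> t \<Longrightarrow> w s = 0 \<or> w t = 0"
  shows "(LINT x|lborel. (cmod (comb S w \<sigma> x))\<^sup>2) = (\<Sum>s\<in>S. (cmod (w s))\<^sup>2)"
proof -
  have "(\<Sum>t\<in>S. Re (w s * cnj (w t)) * (if \<sigma> s = \<sigma> t then 1 else 0)) = (cmod (w s))\<^sup>2" if s: "s \<in> S" for s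
  proof -
    have "(\<Sum>t\<in>S. Re (w s * cnj (w t)) * (if \<sigma> s = \<sigma> t then 1 else 0)) = (\<Sum>t\<in>{s}. Re (w s * cnj (w t)) * (if \<sigma> s = \<sigma> t then 1 else 0))"
    proof (rule sum.mono_neutral_right)
      show "finite S" by fact
      show "{s} \<subseteq> S" using s by simp
      show "\<forall>t\<in>S-{s}. Re (w s * cnj (w t)) * (if \<sigma> s = \<sigma> t then 1 else 0) = 0"
      proof
        fix t assume t: "t \<in> S - {s}"
        show "Re (w s * cnj (w t)) * (if \<sigma> s = \<sigma> t then 1 else 0) = 0"
          by (cases "\<sigma> s = \<sigma> t") (use inj[of s t] s t in auto)
      qed
    qed
    also have "\<dots> = (cmod (w s))\<^sup>2" by (simp add: complex_mult_cnj cmod_power2)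
    finally show ?thesis .
  qed
  then have "(\<Sum>s\<in>S. \<Sum>t\<in>S. Re (w s * cnj (w t)) * (if \<sigma> s = \<sigma> t then 1 else 0)) = (\<Sum>s\<in>S. (cmod (w s))\<^sup>2)"
    by (rule sum.cong[OF refl])
  moreover have "(LINT x|lborel. (cmod (comb S w \<sigma> x))\<^sup>2) = (\<Sum>s\<in>S. \<Sum>t\<in>S. Re (w s * cnj (w t)) * (if \<sigma> s = \<sigma> t then 1 else 0))"
    using comb_L2[OF assms(1), of w \<sigma>] by blast
  ultimately show ?thesis by simp
qed

definition Aset :: "nat \<Rightarrow> ('n::finite \<Rightarrow> nat) set" where "Aset N = {\<alpha>. mlen \<alpha> \<le> N}"

lemma le_mlen: "\<alpha> j \<le> mlen \<alpha>"
  unfolding mlen_def by (rule member_le_sum) auto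

lemma finite_Aset: "finite (Aset N :: ('n::finite \<Rightarrow> nat) set)"
proof -
  have "Aset N \<subseteq> PiE (UNIV::'n set) (\<lambda>_. {..N})"
  proof
    fix \<alpha> :: "'n \<Rightarrow> nat" assume a: "\<alpha> \<in> Aset N"
    have "\<alpha> j \<le> N" for j using le_mlen[of \<alpha> j] a unfolding Aset_def by simp
    then show "\<alpha> \<in> PiE (UNIV::'n set) (\<lambda>_. {..N})" by (simp add: PiE_def extensional_def)
  qed
  moreover have "finite (PiE (UNIV::'n set) (\<lambda>_. {..N}))" by (intro finite_PiE) auto
  ultimately show ?thesis by (rule finite_subset)
qed

lemma hermite_space_iff: "f \<in> hermite_space N \<longleftrightarrow> (\<exists>c. f = comb (Aset N) c id)"
  unfolding hermite_space_def comb_def Aset_def id_def by (rule mem_Collect_eq)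

lemma comb_in_space:
  assumes "finite S" and "\<sigma> ` S \<subseteq> Aset K"
  shows "comb S w \<sigma> \<in> hermite_space K"
proof -
  define c where "c \<gamma> = (\<Sum>s\<in>{s\<in>S. \<sigma> s = \<gamma>}. w s)" for \<gamma>
  have "comb S w \<sigma> x = comb (Aset K) c id x" for x
  proof -
    have "comb (Aset K) c id x = (\<Sum>\<gamma>\<in>Aset K. \<Sum>s\<in>{s\<in>S. \<sigma> s = \<gamma>}. w s * complex_of_real (Hm (\<sigma> s) x))"
      unfolding comb_def c_def by (simp add: sum_distrib_right)
    also have "\<dots> = comb S w \<sigma> x"
      unfolding comb_def by (rule sum.group[OF assms(1) finite_Aset assms(2)])
    finally show ?thesis by simp
  qed
  then show ?thesis unfolding hermite_space_iff by blast
qed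

lemma space_add:
  assumes "f \<in> hermite_space K" "g \<in> hermite_space K"
  shows "(\<lambda>x. f x + g x) \<in> hermite_space K"
proof -
  obtain c where fc: "f = comb (Aset K) c id" using assms(1) unfolding hermite_space_iff by blast
  obtain d where gd: "g = comb (Aset K) d id" using assms(2) unfolding hermite_space_iff by blast
  have "(\<lambda>x. f x + g x) = comb (Aset K) (\<lambda>\<alpha>. c \<alpha> + d \<alpha>) id"
    unfolding fc gd comb_def by (simp add: distrib_right sum.distrib)
  then show ?thesis unfolding hermite_space_iff by blast
qed

lemma space_L2:
  assumes "f \<in> hermite_space K"
  shows "integrable lborel (\<lambda>x. (cmod (f x))\<^sup>2)"
proof -
  obtain c where "f = comb (Aset K) c id" using assms unfolding hermite_space_iff by blast
  then show ?thesis using comb_L2[OF finite_Aset, of K c id] by simp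
qed

lemma space_L2_eq:
  assumes "f = comb (Aset K) c id"
  shows "(LINT x|lborel. (cmod (f x))\<^sup>2) = (\<Sum>\<alpha>\<in>Aset K. (cmod (c \<alpha>))\<^sup>2)"
  using assms comb_L2_inj[OF finite_Aset, where \<sigma>=id and w=c] by simp


definition Rst :: "('n::finite \<Rightarrow> nat) \<Rightarrow> 'n \<Rightarrow> real^'n \<Rightarrow> real" where
  "Rst \<alpha> i x = (\<Prod>j\<in>UNIV-{i}. hermite_fun (\<alpha> j) (x $ j))"

lemma Hm_split: "Hm \<alpha> x = hermite_fun (\<alpha> i) (x $ i) * Rst \<alpha> i x"
  unfolding hermite_multi_def Rst_def by (simp add: prod.remove)

lemma Rst_upd: "Rst (\<alpha>(i := m)) i x = Rst \<alpha> i x"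
  unfolding Rst_def by (intro prod.cong) auto

lemma Rst_shift: "Rst \<alpha> i (x + t *\<^sub>R axis i 1) = Rst \<alpha> i x"
  unfolding Rst_def by (intro prod.cong) (auto simp: axis_def)

lemma Hm_upd: "Hm (\<alpha>(i := m)) x = hermite_fun m (x $ i) * Rst \<alpha> i x"
  unfolding Hm_split[of "\<alpha>(i := m)" x i] Rst_upd by simp

definition dphi :: "nat \<Rightarrow> real \<Rightarrow> real" where
  "dphi k y = sqrt (2*real k)/2 * hermite_fun (k - 1) y - sqrt (2*(real k+1))/2 * hermite_fun (Suc k) y"

lemma Hm_vderiv:
  "((\<lambda>t. complex_of_real (Hm \<alpha> (x + t *\<^sub>R axis i 1))) has_vector_derivative
     complex_of_real (sqrt (2*real (\<alpha> i))/2 * Hm (\<alpha>(i := \<alpha> i - 1)) x - sqrt (2*(real (\<alpha> i)+1))/2 * Hm (\<alpha>(i := Suc (\<alpha> i))) x)) (at 0)"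
proof -
  have e: "Hm \<alpha> (x + t *\<^sub>R axis i 1) = hermite_fun (\<alpha> i) (t + x $ i) * Rst \<alpha> i x" for t
  proof -
    have c: "(x + t *\<^sub>R axis i 1) $ i = t + x $ i" by (simp add: axis_def add.commute)
    show ?thesis unfolding Hm_split[of \<alpha> "x + t *\<^sub>R axis i 1" i] Rst_shift c ..
  qed
  have d0: "(hermite_fun (\<alpha> i) has_real_derivative dphi (\<alpha> i) (x $ i)) (at (0 + x $ i))"
    unfolding dphi_def using hermite_deriv by simp
  have d1: "((\<lambda>t. hermite_fun (\<alpha> i) (t + x $ i)) has_real_derivative dphi (\<alpha> i) (x $ i)) (at 0)"
    using DERIV_shift[THEN iffD1, OF d0] .
  have d2: "((\<lambda>t. hermite_fun (\<alpha> i) (t + x $ i) * Rst \<alpha> i x) has_real_derivative dphi (\<alpha> i) (x $ i) * Rst \<alpha> i x) (at 0)"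
    by (rule DERIV_cmult_right[OF d1])
  have v: "dphi (\<alpha> i) (x $ i) * Rst \<alpha> i x = sqrt (2*real (\<alpha> i))/2 * Hm (\<alpha>(i := \<alpha> i - 1)) x - sqrt (2*(real (\<alpha> i)+1))/2 * Hm (\<alpha>(i := Suc (\<alpha> i))) x"
    unfolding dphi_def Hm_upd by (simp add: algebra_simps)
  show ?thesis unfolding e v[symmetric] by (rule has_vector_derivative_of_real[OF d2])
qed

lemma mlen_upd: "mlen (\<alpha>(i := m)) + \<alpha> i = mlen \<alpha> + m"
proof -
  have a: "mlen \<alpha> = \<alpha> i + (\<Sum>j\<in>UNIV-{i}. \<alpha> j)" unfolding mlen_def by (rule sum.remove) auto
  have b1: "(\<Sum>j\<in>UNIV. (\<alpha>(i:=m)) j) = (\<alpha>(i:=m)) i + (\<Sum>j\<in>UNIV-{i}. (\<alpha>(i:=m)) j)" by (rule sum.remove) auto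
  have b2: "(\<Sum>j\<in>UNIV-{i}. (\<alpha>(i:=m)) j) = (\<Sum>j\<in>UNIV-{i}. \<alpha> j)" by (rule sum.cong) auto
  have b: "mlen (\<alpha>(i := m)) = m + (\<Sum>j\<in>UNIV-{i}. \<alpha> j)" unfolding mlen_def b1 b2 by simp
  show ?thesis using a b by simp
qed

lemma cmod_add_sq: "(cmod (a + b))\<^sup>2 \<le> 2 * (cmod a)\<^sup>2 + 2 * (cmod b)\<^sup>2"
proof -
  have "cmod (a + b) \<le> cmod a + cmod b" by (rule norm_triangle_ineq)
  then have "(cmod (a + b))\<^sup>2 \<le> (cmod a + cmod b)\<^sup>2" by (simp add: power_mono)
  also have "\<dots> \<le> 2 * (cmod a)\<^sup>2 + 2 * (cmod b)\<^sup>2"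
  proof -
    have e1: "(cmod a + cmod b)\<^sup>2 = (cmod a)\<^sup>2 + (cmod b)\<^sup>2 + 2*cmod a*cmod b" by (rule power2_sum)
    have e2: "(cmod a - cmod b)\<^sup>2 = (cmod a)\<^sup>2 + (cmod b)\<^sup>2 - 2*cmod a*cmod b" by (rule power2_diff)
    have "0 \<le> (cmod a - cmod b)\<^sup>2" by simp
    then show ?thesis using e1 e2 by linarith
  qed
  finally show ?thesis .
qed

lemma partial_step:
  assumes f: "f \<in> hermite_space M"
  shows "partial i f \<in> hermite_space (Suc M)
     \<and> L2_norm (partial i f) \<le> sqrt (2*(real M+1)) * L2_norm f"
proof -
  obtain c where fc: "f = comb (Aset M) c id" using f hermite_space_iff by metis
  define w1 where "w1 \<alpha> = c \<alpha> * complex_of_real (sqrt (2*real (\<alpha> i))/2)" for \<alpha>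
  define w2 where "w2 \<alpha> = - c \<alpha> * complex_of_real (sqrt (2*(real (\<alpha> i)+1))/2)" for \<alpha>
  define s1 where "s1 \<alpha> = \<alpha>(i := \<alpha> i - 1)" for \<alpha> :: "'a \<Rightarrow> nat"
  define s2 where "s2 \<alpha> = \<alpha>(i := Suc (\<alpha> i))" for \<alpha> :: "'a \<Rightarrow> nat"
  let ?F1 = "comb (Aset M) w1 s1" and ?F2 = "comb (Aset M) w2 s2"
  have pf: "partial i f = (\<lambda>x. ?F1 x + ?F2 x)"
  proof
    fix x
    have "((\<lambda>t. f (x + t *\<^sub>R axis i 1)) has_vector_derivative ?F1 x + ?F2 x) (at 0)"
    proof -
      have "((\<lambda>t. f (x + t *\<^sub>R axis i 1)) has_vector_derivative
        (\<Sum>\<alpha>\<in>Aset M. c \<alpha> * complex_of_real (sqrt (2*real (\<alpha> i))/2 * Hm (\<alpha>(i := \<alpha> i - 1)) x - sqrt (2*(real (\<alpha> i)+1))/2 * Hm (\<alpha>(i := Suc (\<alpha> i))) x))) (at 0)"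
        unfolding fc comb_def id_def
        by (intro has_vector_derivative_sum has_vector_derivative_mult_right Hm_vderiv)
      moreover have "(\<Sum>\<alpha>\<in>Aset M. c \<alpha> * complex_of_real (sqrt (2*real (\<alpha> i))/2 * Hm (\<alpha>(i := \<alpha> i - 1)) x - sqrt (2*(real (\<alpha> i)+1))/2 * Hm (\<alpha>(i := Suc (\<alpha> i))) x))
          = ?F1 x + ?F2 x"
        unfolding comb_def w1_def w2_def s1_def s2_def
        by (simp add: sum.distrib[symmetric] algebra_simps)
      ultimately show ?thesis by simp
    qed
    then show "partial i f x = ?F1 x + ?F2 x"
      unfolding partial_def by (rule vector_derivative_at)
  qed
  have in1: "?F1 \<in> hermite_space (Suc M)"
  proof (rule comb_in_space[OF finite_Aset])
    show "s1 ` Aset M \<subseteq> Aset (Suc M)"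
    proof (rule image_subsetI)
      fix \<alpha> :: "'a \<Rightarrow> nat" assume "\<alpha> \<in> Aset M"
      then have h: "mlen \<alpha> \<le> M" by (simp add: Aset_def)
      have "mlen (s1 \<alpha>) + \<alpha> i = mlen \<alpha> + (\<alpha> i - 1)" unfolding s1_def by (rule mlen_upd)
      then show "s1 \<alpha> \<in> Aset (Suc M)" using h unfolding Aset_def mem_Collect_eq by linarith
    qed
  qed
  have in2: "?F2 \<in> hermite_space (Suc M)"
  proof (rule comb_in_space[OF finite_Aset])
    show "s2 ` Aset M \<subseteq> Aset (Suc M)"
    proof (rule image_subsetI)
      fix \<alpha> :: "'a \<Rightarrow> nat" assume "\<alpha> \<in> Aset M"
      then have h: "mlen \<alpha> \<le> M" by (simp add: Aset_def)
      have "mlen (s2 \<alpha>) + \<alpha> i = mlen \<alpha> + Suc (\<alpha> i)" unfolding s2_def by (rule mlen_upd)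
      then show "s2 \<alpha> \<in> Aset (Suc M)" using h unfolding Aset_def mem_Collect_eq by linarith
    qed
  qed
  have inS: "partial i f \<in> hermite_space (Suc M)" unfolding pf by (rule space_add[OF in1 in2])
  have n1: "(LINT x|lborel. (cmod (?F1 x))\<^sup>2) = (\<Sum>\<alpha>\<in>Aset M. (cmod (w1 \<alpha>))\<^sup>2)"
  proof (rule comb_L2_inj[OF finite_Aset])
    fix a b assume "s1 a = s1 b" "a \<noteq> b"
    then have "a i \<noteq> b i" "a i - 1 = b i - 1" unfolding s1_def
      by (metis fun_upd_idem_iff fun_upd_upd fun_upd_apply ext) (metis \<open>s1 a = s1 b\<close> s1_def fun_upd_same)
    then have "a i = 0 \<or> b i = 0" by arith
    then show "w1 a = 0 \<or> w1 b = 0" unfolding w1_def by auto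
  qed
  have n2: "(LINT x|lborel. (cmod (?F2 x))\<^sup>2) = (\<Sum>\<alpha>\<in>Aset M. (cmod (w2 \<alpha>))\<^sup>2)"
  proof (rule comb_L2_inj[OF finite_Aset])
    fix a b assume "s2 a = s2 b" "a \<noteq> b"
    then have False unfolding s2_def
      by (metis fun_upd_idem_iff fun_upd_upd fun_upd_same Suc_inject)
    then show "w2 a = 0 \<or> w2 b = 0" ..
  qed
  have i1: "integrable lborel (\<lambda>x. (cmod (?F1 x))\<^sup>2)" by (rule space_L2[OF in1])
  have i2: "integrable lborel (\<lambda>x. (cmod (?F2 x))\<^sup>2)" by (rule space_L2[OF in2])
  have i3: "integrable lborel (\<lambda>x. (cmod (partial i f x))\<^sup>2)" by (rule space_L2[OF inS])
  have "(LINT x|lborel. (cmod (partial i f x))\<^sup>2) \<le> (LINT x|lborel. 2 * (cmod (?F1 x))\<^sup>2 + 2 * (cmod (?F2 x))\<^sup>2)"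
    using i3 i1 i2 by (intro integral_mono) (auto simp: pf cmod_add_sq)
  also have "\<dots> = 2 * (\<Sum>\<alpha>\<in>Aset M. (cmod (w1 \<alpha>))\<^sup>2) + 2 * (\<Sum>\<alpha>\<in>Aset M. (cmod (w2 \<alpha>))\<^sup>2)"
    using i1 i2 n1 n2 by simp
  also have "\<dots> = (\<Sum>\<alpha>\<in>Aset M. (cmod (c \<alpha>))\<^sup>2 * (2 * real (\<alpha> i) + 1))"
    unfolding sum_distrib_left sum.distrib[symmetric]
  proof (rule sum.cong[OF refl])
    fix \<alpha> :: "'a \<Rightarrow> nat"
    have a1: "(cmod (w1 \<alpha>))\<^sup>2 = (cmod (c \<alpha>))\<^sup>2 * ((sqrt (2*real (\<alpha> i)))\<^sup>2 / 4)"
      unfolding w1_def norm_mult norm_of_real by (simp add: power_mult_distrib power_divide)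
    have a2: "(cmod (w2 \<alpha>))\<^sup>2 = (cmod (c \<alpha>))\<^sup>2 * ((sqrt (2*(real (\<alpha> i)+1)))\<^sup>2 / 4)"
      unfolding w2_def norm_mult norm_of_real norm_minus_cancel by (simp add: power_mult_distrib power_divide)
    have q1: "(sqrt (2*real (\<alpha> i)))\<^sup>2 = 2*real (\<alpha> i)" by simp
    have q2: "(sqrt (2*(real (\<alpha> i)+1)))\<^sup>2 = 2*(real (\<alpha> i)+1)" by simp
    show "2 * (cmod (w1 \<alpha>))\<^sup>2 + 2 * (cmod (w2 \<alpha>))\<^sup>2 = (cmod (c \<alpha>))\<^sup>2 * (2 * real (\<alpha> i) + 1)"
      unfolding a1 a2 q1 q2 by (simp add: algebra_simps)
  qed
  also have "\<dots> \<le> (\<Sum>\<alpha>\<in>Aset M. (cmod (c \<alpha>))\<^sup>2 * (2 * (real M + 1)))"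
  proof (intro sum_mono mult_left_mono)
    fix \<alpha> :: "'a \<Rightarrow> nat" assume "\<alpha> \<in> Aset M"
    then have "\<alpha> i \<le> M" using le_mlen[of \<alpha> i] unfolding Aset_def by simp
    then show "2 * real (\<alpha> i) + 1 \<le> 2 * (real M + 1)" by simp
  qed simp
  also have "\<dots> = 2 * (real M + 1) * (LINT x|lborel. (cmod (f x))\<^sup>2)"
    using space_L2_eq[OF fc] by (simp add: sum_distrib_left mult_ac)
  finally have sq: "(LINT x|lborel. (cmod (partial i f x))\<^sup>2) \<le> 2 * (real M + 1) * (LINT x|lborel. (cmod (f x))\<^sup>2)" .
  have "L2_norm (partial i f) \<le> sqrt (2 * (real M + 1) * (LINT x|lborel. (cmod (f x))\<^sup>2))"
    unfolding L2_norm_def using sq by simp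
  then show ?thesis using inS unfolding L2_norm_def by (simp add: real_sqrt_mult)
qed


lemma pow_fact_le_exp: "(x::real) \<ge> 0 \<Longrightarrow> x^j / fact j \<le> exp x"
proof -
  assume x: "x \<ge> 0"
  have s: "(\<lambda>n. x^n / fact n) sums exp x" using exp_converges[of x] by (simp add: divide_inverse mult.commute)
  have "(\<Sum>n\<in>{j}. x^n / fact n) \<le> suminf (\<lambda>n. x^n / fact n)"
    by (rule sum_le_suminf) (use s x in \<open>auto simp: sums_iff\<close>)
  then show ?thesis using s by (simp add: sums_iff)
qed

lemma prodmax_aux:
  assumes x: "(x::real) \<ge> 0"
  shows "(\<exists>j. (\<Prod>k<m. max 1 (x/(real k+1))) \<le> x^j / fact j)
    \<and> (real m \<le> x \<longrightarrow> (\<Prod>k<m. max 1 (x/(real k+1))) = x^m / fact m)"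
proof (induction m)
  case 0 then show ?case by (auto intro!: exI[of _ 0])
next
  case (Suc m)
  let ?P = "\<lambda>m. (\<Prod>k<m. max 1 (x/(real k+1)))"
  have PS: "?P (Suc m) = ?P m * max 1 (x/(real m+1))" by simp
  have r: "x^Suc m / fact (Suc m) = (x^m/fact m) * (x/(real m+1))" by (simp add: field_simps)
  show ?case
  proof (cases "x \<le> real m + 1")
    case True
    then have mx: "max 1 (x/(real m+1)) = 1" by (simp add: divide_le_eq)
    have A: "\<exists>j. ?P (Suc m) \<le> x^j / fact j" using Suc.IH PS mx by simp
    have B: "?P (Suc m) = x^Suc m / fact (Suc m)" if "real (Suc m) \<le> x"
    proof -
      have xe: "x = real m + 1" using that True by simp
      have "?P m = x^m / fact m" using Suc.IH that by simp
      moreover have "x/(real m+1) = 1" using xe by simp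
      ultimately show ?thesis using PS mx r by simp
    qed
    show ?thesis using A B by blast
  next
    case False
    then have mx: "max 1 (x/(real m+1)) = x/(real m+1)" by (simp add: le_divide_eq)
    have "?P m = x^m / fact m" using Suc.IH False by simp
    then have B: "?P (Suc m) = x^Suc m / fact (Suc m)" using PS mx r by simp
    then have "?P (Suc m) \<le> x^Suc m / fact (Suc m)" by simp
    then show ?thesis using B by blast
  qed
qed

lemma prodmax: "(x::real) \<ge> 0 \<Longrightarrow> (\<Prod>k<m. max 1 (x/(real k+1))) \<le> exp x"
  using prodmax_aux[of x m] pow_fact_le_exp by (meson order_trans)

lemma prod_sqrt: "(\<Prod>k<(m::nat). sqrt (g k)) = sqrt (\<Prod>k<m. g k)"
  by (induction m) (simp_all add: real_sqrt_mult)

lemma le_mult_ge1: "(X::real) \<ge> 0 \<Longrightarrow> 1 \<le> s \<Longrightarrow> X \<le> X * s"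
  using mult_left_mono[of 1 s X] by simp

lemma factor_bound:
  fixes N :: nat and \<delta> a :: real
  assumes d: "0 < \<delta>" and a: "a \<ge> 1"
  shows "sqrt (2*(real N + a)) \<le> 2*\<delta>*a * max 1 ((sqrt (real N)/\<delta>)/a) * sqrt (max 1 ((1/\<delta>^2)/a))"
proof -
  let ?t = "(sqrt (real N)/\<delta>)/a" and ?u = "(1/\<delta>^2)/a"
  have c: "0 \<le> 2*\<delta>*a" using d a by simp
  have s1: "1 \<le> sqrt (max 1 ?u)" by simp
  show ?thesis
  proof (cases "real N \<ge> a")
    case True
    have "sqrt (2*(real N + a)) \<le> sqrt (4 * real N)" using True by simp
    also have "\<dots> = 2 * sqrt (real N)" by (simp add: real_sqrt_mult)
    also have "\<dots> = 2*\<delta>*a * ?t" using d a by (simp add: field_simps)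
    also have "\<dots> \<le> 2*\<delta>*a * max 1 ?t" by (rule mult_left_mono[OF _ c]) simp
    also have "\<dots> \<le> 2*\<delta>*a * max 1 ?t * sqrt (max 1 ?u)"
      by (rule le_mult_ge1[OF _ s1]) (use c in simp)
    finally show ?thesis .
  next
    case False
    have "sqrt (2*(real N + a)) \<le> sqrt (4 * a)" using False by simp
    also have "\<dots> = 2 * sqrt a" by (simp add: real_sqrt_mult)
    also have "\<dots> = 2*\<delta>*a * sqrt ?u"
    proof -
      have su: "sqrt ?u = 1 / (\<delta> * sqrt a)"
        using d a by (simp add: real_sqrt_divide real_sqrt_mult)
      have sa: "sqrt a * sqrt a = a" using a by simp
      have pa: "sqrt a > 0" using a by simp
      have "2*\<delta>*a * (1 / (\<delta> * sqrt a)) = 2 * (a / sqrt a)" using d pa by simp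
      also have "\<dots> = 2 * sqrt a" using a by (simp add: real_div_sqrt)
      finally show ?thesis unfolding su by simp
    qed
    also have "\<dots> \<le> 2*\<delta>*a * sqrt (max 1 ?u)" by (rule mult_left_mono[OF _ c]) simp
    also have "\<dots> \<le> (2*\<delta>*a * sqrt (max 1 ?u)) * max 1 ?t"
      by (rule le_mult_ge1) (use c in simp_all)
    finally show ?thesis by (simp add: mult_ac)
  qed
qed

definition G :: "nat \<Rightarrow> nat \<Rightarrow> real" where "G a m = (\<Prod>k<m. sqrt (2*(real a + real k + 1)))"

lemma G_nonneg: "G a m \<ge> 0" unfolding G_def by (simp add: prod_nonneg)

lemma G_add: "G a (m + l) = G a m * G (a + m) l"
  unfolding G_def by (induction l) (simp_all add: algebra_simps)

lemma G_bound:
  assumes d: "0 < \<delta>" "\<delta> \<le> 1"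
  shows "G N m \<le> exp (exp 1 / (2 * \<delta>\<^sup>2)) * (2 * \<delta>) ^ m * fact m * exp (sqrt (real N) / \<delta>)"
proof -
  let ?x = "sqrt (real N)/\<delta>" and ?y = "1/\<delta>^2"
  have "G N m \<le> (\<Prod>k<m. 2*\<delta>*(real k+1) * max 1 (?x/(real k+1)) * sqrt (max 1 (?y/(real k+1))))"
    unfolding G_def
    by (intro prod_mono conjI) (use factor_bound[OF d(1), of "real _ + 1" N] in \<open>auto simp: add.assoc\<close>)
  also have "\<dots> = (\<Prod>k<m. 2*\<delta>*(real k+1)) * (\<Prod>k<m. max 1 (?x/(real k+1))) * sqrt (\<Prod>k<m. max 1 (?y/(real k+1)))"
    by (simp add: prod.distrib prod_sqrt)
  also have "(\<Prod>k<m. 2*\<delta>*(real k+1)) = (2*\<delta>)^m * fact m"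
    by (induction m) (simp_all add: algebra_simps)
  also have "(2*\<delta>)^m * fact m * (\<Prod>k<m. max 1 (?x/(real k+1))) * sqrt (\<Prod>k<m. max 1 (?y/(real k+1)))
      \<le> (2*\<delta>)^m * fact m * exp ?x * sqrt (exp ?y)"
    using d by (intro mult_mono prodmax real_sqrt_le_mono) (auto simp: prod_nonneg)
  also have "sqrt (exp ?y) = exp (?y/2)"
    by (rule real_sqrt_unique) (simp_all add: power2_eq_square exp_add[symmetric])
  also have "(2*\<delta>)^m * fact m * exp ?x * exp (?y/2) \<le> (2*\<delta>)^m * fact m * exp ?x * exp (exp 1 / (2 * \<delta>\<^sup>2))"
  proof (rule mult_left_mono)
    have "?y/2 = 1 / (2*\<delta>^2)" by simp
    also have "\<dots> \<le> exp 1 / (2*\<delta>^2)"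
      using d by (intro divide_right_mono) (auto intro: order_trans[OF _ exp_ge_add_one_self])
    finally show "exp (?y/2) \<le> exp (exp 1 / (2 * \<delta>\<^sup>2))" by simp
    show "0 \<le> (2*\<delta>)^m * fact m * exp ?x" using d by simp
  qed
  also have "(2*\<delta>)^m * fact m * exp ?x * exp (exp 1 / (2 * \<delta>\<^sup>2)) = exp (exp 1 / (2 * \<delta>\<^sup>2)) * (2 * \<delta>) ^ m * fact m * exp ?x"
    by (simp only: mult_ac)
  finally show ?thesis .
qed


lemma iter_step:
  assumes f: "f \<in> hermite_space M"
  shows "(partial i ^^ m) f \<in> hermite_space (M + m)
     \<and> L2_norm ((partial i ^^ m) f) \<le> G M m * L2_norm f"
proof (induction m)
  case 0 then show ?case using f by (simp add: G_def)
next
  case (Suc m)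
  let ?g = "(partial i ^^ m) f"
  have st: "partial i ?g \<in> hermite_space (Suc (M + m)) \<and> L2_norm (partial i ?g) \<le> sqrt (2*(real (M + m)+1)) * L2_norm ?g"
    by (rule partial_step) (use Suc.IH in blast)
  have "L2_norm (partial i ?g) \<le> sqrt (2*(real (M + m)+1)) * (G M m * L2_norm f)"
    using st Suc.IH by (meson mult_left_mono order_trans real_sqrt_ge_zero le_add_same_cancel1 zero_le_mult_iff zero_le_numeral of_nat_0_le_iff add_nonneg_nonneg zero_le_one)
  also have "\<dots> = G M (Suc m) * L2_norm f"
    by (simp add: G_def algebra_simps)
  finally show ?case using st by simp
qed

lemma fold_step:
  assumes f: "f \<in> hermite_space M"
  shows "foldr (\<lambda>i g. (partial i ^^ \<beta> i) g) xs f \<in> hermite_space (M + sum_list (map \<beta> xs))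
     \<and> L2_norm (foldr (\<lambda>i g. (partial i ^^ \<beta> i) g) xs f) \<le> G M (sum_list (map \<beta> xs)) * L2_norm f"
proof (induction xs)
  case Nil then show ?case using f by (simp add: G_def)
next
  case (Cons x xs)
  let ?s = "sum_list (map \<beta> xs)"
  let ?g = "foldr (\<lambda>i g. (partial i ^^ \<beta> i) g) xs f"
  have st: "(partial x ^^ \<beta> x) ?g \<in> hermite_space (M + ?s + \<beta> x)
     \<and> L2_norm ((partial x ^^ \<beta> x) ?g) \<le> G (M + ?s) (\<beta> x) * L2_norm ?g"
    by (rule iter_step) (use Cons.IH in blast)
  have "L2_norm ((partial x ^^ \<beta> x) ?g) \<le> G (M + ?s) (\<beta> x) * (G M ?s * L2_norm f)"
    using st Cons.IH G_nonneg by (meson mult_left_mono order_trans)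
  also have "\<dots> = G M (?s + \<beta> x) * L2_norm f" by (simp add: G_add)
  finally show ?case using st by (simp add: add.commute add.left_commute)
qed

lemma coord_list_prop: "distinct (coord_list :: 'n::finite list) \<and> set (coord_list :: 'n list) = UNIV"
proof -
  have "\<exists>xs::'n list. distinct xs \<and> set xs = UNIV" using finite_distinct_list[of "UNIV :: 'n set"] by auto
  then show ?thesis unfolding coord_list_def by (rule someI_ex)
qed

lemma mlen_coord: "sum_list (map \<beta> (coord_list :: 'n::finite list)) = mlen \<beta>"
  using coord_list_prop sum_list_distinct_conv_sum_set unfolding mlen_def by metis

theorem mainTheorem10:
  fixes N :: nat and f :: "real ^ 'n::finite \<Rightarrow> complex" and \<delta> :: real and \<beta> :: "'n \<Rightarrow> nat"
  assumes "f \<in> hermite_space N" and "0 < \<delta>" and "\<delta> \<le> 1"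
  shows "L2_norm (multi_partial \<beta> f)
    \<le> exp (exp 1 / (2 * \<delta>\<^sup>2)) * (2 * \<delta>) ^ mlen \<beta> * fact (mlen \<beta>) * exp (sqrt (real N) / \<delta>)
       * L2_norm f"
proof -
  have "L2_norm (multi_partial \<beta> f) \<le> G N (mlen \<beta>) * L2_norm f"
    using fold_step[OF assms(1), of \<beta> coord_list] unfolding multi_partial_def mlen_coord by blast
  also have "\<dots> \<le> exp (exp 1 / (2 * \<delta>\<^sup>2)) * (2 * \<delta>) ^ mlen \<beta> * fact (mlen \<beta>) * exp (sqrt (real N) / \<delta>) * L2_norm f"
    by (rule mult_right_mono[OF G_bound[OF assms(2,3)]]) (simp add: L2_norm_def)
  finally show ?thesis .
qed


end
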